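(* Let $\mathcal H^{\mathbb C}$ be a complex separable infinite-dimensional Hilbert space with a fixed complete orthonormal system $\{e_j\}_{j\ge1}$. Let $K=\{x:\|x\|\le1\}$, the weak closure of the unit sphere, endowed with the weak topology (so $K$ is compact). For each $N$, let $G_N$ be either $U(N)$ or $SU(N)$, acting on $\mathcal H^{\mathbb C}$ via its fundamental representation on $\operatorname{span}_{\mathbb C}(e_1,\dots,e_N)$ and trivially on its orthogonal complement. Define $$\mu^x_N(A)=\mu_{G_N}(\{g\in G_N:gx\in A\})$$ for $x\in K$ and Borel $A\subseteq K$, with $\mu_{G_N}$ the normalised Haar measure. Then for every $x\in K$, $\mu^x_N\to\delta_0$ weakly as $N\to\infty$.
   Context: The weak topology is the coarsest topology making all maps $x\mapsto\langle v,x\rangle$, $v\in\mathcal H^{\mathbb C}$, continuous. Weak convergence of probability measures on $K$ means convergence of integrals of all continuous functions on $K$. $\delta_0$ is the Dirac measure at the origin. *)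

theory Defs
  imports "HOL-Analysis.Analysis" "HOL-Probability.Probability"
begin

text \<open>A complex separable infinite-dimensional Hilbert space with fixed complete
orthonormal system e_1, e_2, ... is modelled (via coordinates w.r.t. that system)
as l2 of square-summable complex sequences; e_(j+1) is the indicator of index j
(0-based indexing).\<close>

definition l2 :: "(nat \<Rightarrow> complex) set" where
  "l2 = {x. summable (\<lambda>i. (cmod (x i))^2)}"

definition l2_norm :: "(nat \<Rightarrow> complex) \<Rightarrow> real" where
  "l2_norm x = sqrt (\<Sum>i. (cmod (x i))^2)"

definition l2_inner :: "(nat \<Rightarrow> complex) \<Rightarrow> (nat \<Rightarrow> complex) \<Rightarrow> complex" where
  "l2_inner v x = (\<Sum>i. cnj (v i) * x i)"

definition weak_top :: "(nat \<Rightarrow> complex) topology" where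
  "weak_top = topology_generated_by
     {{x \<in> l2. l2_inner v x \<in> U} | v U. v \<in> l2 \<and> open U}"

definition Kball :: "(nat \<Rightarrow> complex) set" where
  "Kball = {x \<in> l2. l2_norm x \<le> 1}"

definition K_top :: "(nat \<Rightarrow> complex) topology" where
  "K_top = subtopology weak_top Kball"

definition borel_of_top :: "'a topology \<Rightarrow> 'a measure" where
  "borel_of_top T = sigma (topspace T) {U. openin T U}"

text \<open>An N x N matrix is represented as a function nat => nat => complex vanishing
outside {0..<N} x {0..<N}.\<close>

definition mat_N :: "nat \<Rightarrow> (nat \<Rightarrow> nat \<Rightarrow> complex) set" where
  "mat_N N = {M. \<forall>i j. \<not> (i < N \<and> j < N) \<longrightarrow> M i j = 0}"

definition mat_mult :: "nat \<Rightarrow> (nat \<Rightarrow> nat \<Rightarrow> complex) \<Rightarrow> (nat \<Rightarrow> nat \<Rightarrow> complex)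
    \<Rightarrow> (nat \<Rightarrow> nat \<Rightarrow> complex)" where
  "mat_mult N A B = (\<lambda>i j. if i < N \<and> j < N then \<Sum>k<N. A i k * B k j else 0)"

definition mat_det :: "nat \<Rightarrow> (nat \<Rightarrow> nat \<Rightarrow> complex) \<Rightarrow> complex" where
  "mat_det N M = (\<Sum>p | p permutes {..<N}. of_int (sign p) * (\<Prod>i<N. M i (p i)))"

definition unitary_group :: "nat \<Rightarrow> (nat \<Rightarrow> nat \<Rightarrow> complex) set" where
  "unitary_group N = {M \<in> mat_N N. \<forall>i<N. \<forall>j<N.
      (\<Sum>k<N. cnj (M k i) * M k j) = (if i = j then 1 else 0)}"

definition special_unitary_group :: "nat \<Rightarrow> (nat \<Rightarrow> nat \<Rightarrow> complex) set" where
  "special_unitary_group N = {M \<in> unitary_group N. mat_det N M = 1}"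

definition act :: "nat \<Rightarrow> (nat \<Rightarrow> nat \<Rightarrow> complex) \<Rightarrow> (nat \<Rightarrow> complex) \<Rightarrow> (nat \<Rightarrow> complex)" where
  "act N M x = (\<lambda>i. if i < N then (\<Sum>j<N. M i j * x j) else x i)"

definition is_haar :: "nat \<Rightarrow> (nat \<Rightarrow> nat \<Rightarrow> complex) set
    \<Rightarrow> (nat \<Rightarrow> nat \<Rightarrow> complex) measure \<Rightarrow> bool" where
  "is_haar N G \<mu> \<longleftrightarrow> prob_space \<mu> \<and> sets \<mu> = sets (restrict_space borel G)
     \<and> (\<forall>g\<in>G. \<forall>A\<in>sets \<mu>. emeasure \<mu> {h \<in> G. mat_mult N g h \<in> A} = emeasure \<mu> A)"

definition orbit_measure :: "nat \<Rightarrow> (nat \<Rightarrow> nat \<Rightarrow> complex) measure \<Rightarrow> (nat \<Rightarrow> complex)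
    \<Rightarrow> (nat \<Rightarrow> complex) measure" where
  "orbit_measure N \<mu> x = distr \<mu> (borel_of_top K_top) (\<lambda>g. act N g x)"

end

theory Submission
  imports Defs
begin

definition idm :: "nat \<Rightarrow> nat \<Rightarrow> nat \<Rightarrow> complex" where
  "idm N = (\<lambda>i j. if i < N \<and> i = j then 1 else 0)"

definition rowop :: "(nat \<Rightarrow> complex) \<Rightarrow> (nat \<Rightarrow> nat) \<Rightarrow> (nat \<Rightarrow> nat \<Rightarrow> complex) \<Rightarrow> (nat \<Rightarrow> nat \<Rightarrow> complex)" where
  "rowop c t M = (\<lambda>i j. c i * M (t i) j)"

lemma rowop_mat_N:
  assumes "M \<in> mat_N N" "t permutes {..<N}"
  shows "rowop c t M \<in> mat_N N"
  using assms unfolding mat_N_def rowop_def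
  by (auto, metis lessThan_iff permutes_not_in)

lemma rowop_unitary:
  assumes "M \<in> unitary_group N" "t permutes {..<N}" "\<And>i. i < N \<Longrightarrow> cmod (c i) = 1"
  shows "rowop c t M \<in> unitary_group N"
proof -
  have M: "M \<in> mat_N N" "\<And>i j. i < N \<Longrightarrow> j < N \<Longrightarrow> (\<Sum>k<N. cnj (M k i) * M k j) = (if i = j then 1 else 0)"
    using assms(1) unfolding unitary_group_def by auto
  have cc: "cnj (c k) * c k = 1" if "k < N" for k
    using assms(3)[OF that] by (metis complex_norm_square mult.commute of_real_1 power_one)
  have "(\<Sum>k<N. cnj (rowop c t M k i) * rowop c t M k j) = (if i = j then 1 else 0)"
    if "i < N" "j < N" for i j
  proof -
    have "(\<Sum>k<N. cnj (rowop c t M k i) * rowop c t M k j) = (\<Sum>k<N. cnj (M (t k) i) * M (t k) j)"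
      by (rule sum.cong) (auto simp: rowop_def cc mult_ac
          intro: back_subst[of "\<lambda>z. _ = z * _"] dest!: cc)
    also have "\<dots> = (\<Sum>k<N. cnj (M k i) * M k j)"
      using sum.permute[OF assms(2), of "\<lambda>k. cnj (M k i) * M k j"] by (simp add: comp_def)
    finally show ?thesis using M(2) that by simp
  qed
  then show ?thesis using rowop_mat_N[OF M(1) assms(2)] unfolding unitary_group_def by auto
qed

lemma det_rowop_scale:
  "mat_det N (rowop c id M) = (\<Prod>i<N. c i) * mat_det N M"
  unfolding mat_det_def rowop_def
  by (simp add: prod.distrib sum_distrib_left mult_ac)

lemma det_rowop_perm:
  assumes "a < N" "b < N"
  shows "mat_det N (rowop (\<lambda>_. 1) (Transposition.transpose a b) M) = of_int (sign (Transposition.transpose a b)) * mat_det N M"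
proof -
  let ?t = "Transposition.transpose a b"
  have tp: "?t permutes {..<N}" using assms by (simp add: permutes_swap_id)
  let ?H = "\<lambda>q. of_int (sign q) * (\<Prod>i<N. M i (q i)) :: complex"
  have 1: "(\<Prod>i<N. M (?t i) (p i)) = (\<Prod>i<N. M i ((p \<circ> ?t) i))" for p
    using prod.permute[OF tp, of "\<lambda>i. M i (p (?t i))"] by (simp add: comp_def)
  have 2: "of_int (sign p) = (of_int (sign ?t) :: complex) * of_int (sign (p \<circ> ?t))"
    if "p permutes {..<N}" for p
  proof -
    have pp: "permutation p" "permutation ?t"
      using that tp by (auto simp: permutation_permutes)
    have "sign (p \<circ> ?t) = sign p * sign ?t" by (rule sign_compose[OF pp])
    then have "sign ?t * sign (p \<circ> ?t) = sign p * (sign ?t * sign ?t)" by (simp add: mult_ac)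
    then show ?thesis by (simp flip: of_int_mult)
  qed
  have "mat_det N (rowop (\<lambda>_. 1) ?t M) = (\<Sum>p | p permutes {..<N}. of_int (sign ?t) * ?H (p \<circ> ?t))"
    unfolding mat_det_def rowop_def
    by (rule sum.cong) (auto simp: 1 2 mult_ac)
  also have "\<dots> = of_int (sign ?t) * (\<Sum>p | p permutes {..<N}. ?H (p \<circ> ?t))"
    by (simp add: sum_distrib_left)
  also have "(\<Sum>p | p permutes {..<N}. ?H (p \<circ> ?t)) = (\<Sum>p | p permutes {..<N}. ?H p)"
    using sum_permutations_compose_right[OF tp, of ?H] by simp
  finally show ?thesis unfolding mat_det_def .
qed

lemma det_idm: "mat_det N (idm N) = 1"
proof -
  have "mat_det N (idm N) = (\<Sum>p\<in>{id}. of_int (sign p) * (\<Prod>i<N. idm N i (p i)))"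
    unfolding mat_det_def
  proof (rule sum.mono_neutral_cong_right)
    show "{id} \<subseteq> {p. p permutes {..<N}}" by (simp add: permutes_id)
    show "\<forall>p\<in>{p. p permutes {..<N}} - {id}. of_int (sign p) * (\<Prod>i<N. idm N i (p i)) = 0"
    proof
      fix p assume p: "p \<in> {p. p permutes {..<N}} - {id}"
      then have "\<exists>i<N. p i \<noteq> i"
        by (auto simp: fun_eq_iff permutes_def)
      then obtain i where "i < N" "p i \<noteq> i" by blast
      then have "(\<Prod>i<N. idm N i (p i)) = 0"
        by (intro prod_zero) (auto simp: idm_def intro!: bexI[of _ i])
      then show "of_int (sign p) * (\<Prod>i<N. idm N i (p i)) = 0" by simp
    qed
  qed (auto simp: finite_permutations)
  also have "\<dots> = 1" by (simp add: idm_def)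
  finally show ?thesis .
qed

lemma idm_unitary: "idm N \<in> unitary_group N"
  unfolding unitary_group_def mat_N_def idm_def
  by (auto simp: if_distrib[of cnj] if_distrib[of "\<lambda>z. z * _"] sum.delta' cong: if_cong)

lemma mult_rowop_idm:
  assumes "M \<in> mat_N N" "t permutes {..<N}"
  shows "mat_mult N (rowop c t (idm N)) M = rowop c t M"
proof (rule ext, rule ext)
  fix i j
  show "mat_mult N (rowop c t (idm N)) M i j = rowop c t M i j"
  proof (cases "i < N \<and> j < N")
    case True
    then have ti: "t i < N" using assms(2) by (metis lessThan_iff permutes_in_image)
    have "(\<Sum>k<N. rowop c t (idm N) i k * M k j) = (\<Sum>k<N. if k = t i then c i * M k j else 0)"
      by (rule sum.cong) (auto simp: rowop_def idm_def ti)
    also have "\<dots> = c i * M (t i) j" using ti by (simp add: sum.delta')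
    finally show ?thesis using True by (simp add: mat_mult_def rowop_def)
  next
    case False
    then show ?thesis using rowop_mat_N[OF assms, of c] unfolding mat_mult_def mat_N_def by auto
  qed
qed

lemma det_rowop:
  assumes "a < N" "b < N"
  shows "mat_det N (rowop c (Transposition.transpose a b) M)
       = (\<Prod>i<N. c i) * of_int (sign (Transposition.transpose a b)) * mat_det N M"
proof -
  have "rowop c (Transposition.transpose a b) M = rowop c id (rowop (\<lambda>_. 1) (Transposition.transpose a b) M)"
    by (simp add: rowop_def)
  then show ?thesis using det_rowop_scale det_rowop_perm[OF assms] by (simp add: mult_ac)
qed

lemma group_op:
  assumes G: "G = unitary_group N \<or> G = special_unitary_group N"
    and ab: "a < N" "b < N"
    and c: "\<And>i. i < N \<Longrightarrow> cmod (c i) = 1"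
    and pr: "(\<Prod>i<N. c i) * of_int (sign (Transposition.transpose a b)) = 1"
  shows "rowop c (Transposition.transpose a b) (idm N) \<in> G"
    and "\<And>h. h \<in> G \<Longrightarrow> rowop c (Transposition.transpose a b) h \<in> G"
    and "\<And>h. h \<in> G \<Longrightarrow> mat_mult N (rowop c (Transposition.transpose a b) (idm N)) h = rowop c (Transposition.transpose a b) h"
proof -
  have tp: "Transposition.transpose a b permutes {..<N}" using ab by (simp add: permutes_swap_id)
  have *: "h \<in> G \<Longrightarrow> rowop c (Transposition.transpose a b) h \<in> G" for h
  proof -
    assume h: "h \<in> G"
    then have hu: "h \<in> unitary_group N" using G by (auto simp: special_unitary_group_def)
    have u: "rowop c (Transposition.transpose a b) h \<in> unitary_group N"
      by (rule rowop_unitary[OF hu tp c])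
    have d: "mat_det N (rowop c (Transposition.transpose a b) h) = mat_det N h"
      using det_rowop[OF ab, of c h] pr by simp
    show ?thesis using G h u d by (auto simp: special_unitary_group_def)
  qed
  have "idm N \<in> G" using G idm_unitary det_idm by (auto simp: special_unitary_group_def)
  then show "rowop c (Transposition.transpose a b) (idm N) \<in> G" by (rule *)
  show "\<And>h. h \<in> G \<Longrightarrow> rowop c (Transposition.transpose a b) h \<in> G" by (rule *)
  show "\<And>h. h \<in> G \<Longrightarrow> mat_mult N (rowop c (Transposition.transpose a b) (idm N)) h = rowop c (Transposition.transpose a b) h"
    using G tp by (intro mult_rowop_idm) (auto simp: special_unitary_group_def unitary_group_def)
qed

lemma haar_space: "is_haar N G \<mu> \<Longrightarrow> space \<mu> = G"
  unfolding is_haar_def by (metis sets_eq_imp_space_eq space_borel space_restrict_space inf_top.right_neutral)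

lemma cont_meas:
  fixes F :: "(nat \<Rightarrow> nat \<Rightarrow> complex) \<Rightarrow> 'b::topological_space"
  assumes "continuous_on UNIV F" "sets \<mu> = sets (restrict_space borel G)"
  shows "F \<in> borel_measurable \<mu>"
proof -
  have "F \<in> borel_measurable (restrict_space borel G)"
    using borel_measurable_continuous_onI[OF assms(1)] by (rule measurable_restrict_space1)
  then show ?thesis using assms(2) measurable_cong_sets by blast
qed

lemma mult_cont: "continuous_on UNIV (\<lambda>h. mat_mult N g h)"
proof (intro continuous_on_coordinatewise_then_product)
  fix i j
  show "continuous_on UNIV (\<lambda>h. mat_mult N g h i j)"
    unfolding mat_mult_def
    by (cases "i < N \<and> j < N") (auto intro!: continuous_intros
        continuous_on_product_then_coordinatewise[OF continuous_on_product_coordinates])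
qed

lemma haar_inv:
  fixes F :: "(nat \<Rightarrow> nat \<Rightarrow> complex) \<Rightarrow> 'b::{banach, second_countable_topology}"
  assumes H: "is_haar N G \<mu>" and g: "g \<in> G" and cl: "\<And>h. h \<in> G \<Longrightarrow> mat_mult N g h \<in> G"
    and F: "F \<in> borel_measurable \<mu>"
  shows "(\<integral>h. F h \<partial>\<mu>) = (\<integral>h. F (mat_mult N g h) \<partial>\<mu>)"
proof -
  let ?m = "\<lambda>h. mat_mult N g h"
  have sets: "sets \<mu> = sets (restrict_space borel G)" using H unfolding is_haar_def by auto
  have sp: "space \<mu> = G" using haar_space[OF H] .
  have "?m \<in> measurable (restrict_space borel G) (restrict_space borel G)"
    using borel_measurable_continuous_onI[OF mult_cont] cl by (intro measurable_restrict_space3) auto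
  then have m: "?m \<in> measurable \<mu> \<mu>" using sets by (simp cong: measurable_cong_sets)
  have "distr \<mu> \<mu> ?m = \<mu>"
  proof (rule measure_eqI)
    fix A assume "A \<in> sets (distr \<mu> \<mu> ?m)"
    then have A: "A \<in> sets \<mu>" by simp
    have "emeasure (distr \<mu> \<mu> ?m) A = emeasure \<mu> (?m -` A \<inter> space \<mu>)"
      by (rule emeasure_distr[OF m A])
    also have "?m -` A \<inter> space \<mu> = {h \<in> G. ?m h \<in> A}" using sp by auto
    also have "emeasure \<mu> \<dots> = emeasure \<mu> A" using H g A unfolding is_haar_def by auto
    finally show "emeasure (distr \<mu> \<mu> ?m) A = emeasure \<mu> A" .
  qed simp
  then have "(\<integral>h. F h \<partial>\<mu>) = (\<integral>h. F h \<partial>(distr \<mu> \<mu> ?m))" by simp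
  also have "\<dots> = (\<integral>h. F (?m h) \<partial>\<mu>)" by (rule integral_distr[OF m F])
  finally show ?thesis .
qed

definition wv :: "nat \<Rightarrow> (nat \<Rightarrow> complex) \<Rightarrow> nat \<Rightarrow> (nat \<Rightarrow> nat \<Rightarrow> complex) \<Rightarrow> complex" where
  "wv N x a h = (\<Sum>j<N. h a j * x j)"

lemma coord_cont: "continuous_on UNIV (\<lambda>h::nat \<Rightarrow> nat \<Rightarrow> complex. h i j)"
  by (rule continuous_on_product_then_coordinatewise[OF continuous_on_product_coordinates])

lemma wv_cont: "continuous_on UNIV (wv N x a)"
  unfolding wv_def by (intro continuous_intros coord_cont)

lemma unitary_entry_le:
  assumes "h \<in> unitary_group N"
  shows "cmod (h i j) \<le> 1"
proof (cases "i < N \<and> j < N")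
  case True
  have "(\<Sum>k<N. cnj (h k j) * h k j) = 1" using assms True unfolding unitary_group_def by auto
  moreover have "complex_of_real (\<Sum>k<N. (cmod (h k j))^2) = (\<Sum>k<N. h k j * cnj (h k j))"
    by (simp only: of_real_sum complex_norm_square)
  ultimately have "complex_of_real (\<Sum>k<N. (cmod (h k j))^2) = 1"
    by (simp add: mult.commute)
  then have s: "(\<Sum>k<N. (cmod (h k j))^2) = 1" using of_real_eq_1_iff by blast
  have "(cmod (h i j))^2 \<le> (\<Sum>k<N. (cmod (h k j))^2)"
    using True by (intro member_le_sum) auto
  then have "(cmod (h i j))^2 \<le> 1^2" using s by simp
  from power2_le_imp_le[OF this] show ?thesis by simp
next
  case False
  then have "h i j = 0" using assms unfolding unitary_group_def mat_N_def by auto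
  then show ?thesis by simp
qed

lemma wv_bound:
  assumes "h \<in> unitary_group N"
  shows "cmod (wv N x a h) \<le> (\<Sum>j<N. cmod (x j))"
proof -
  have "cmod (wv N x a h) \<le> (\<Sum>j<N. cmod (h a j * x j))" unfolding wv_def by (rule norm_sum)
  also have "\<dots> \<le> (\<Sum>j<N. cmod (x j))"
  proof (rule sum_mono)
    fix j show "cmod (h a j * x j) \<le> cmod (x j)"
      unfolding norm_mult by (rule mult_left_le_one_le) (simp_all add: unitary_entry_le[OF assms])
  qed
  finally show ?thesis .
qed

lemma G_unitary: "G = unitary_group N \<or> G = special_unitary_group N \<Longrightarrow> h \<in> G \<Longrightarrow> h \<in> unitary_group N"
  by (auto simp: special_unitary_group_def)

lemma bc_integrable:
  fixes F :: "(nat \<Rightarrow> nat \<Rightarrow> complex) \<Rightarrow> 'b::{banach, second_countable_topology}"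
  assumes H: "is_haar N G \<mu>" and c: "continuous_on UNIV F" and b: "\<And>h. h \<in> G \<Longrightarrow> norm (F h) \<le> B"
  shows "integrable \<mu> F"
proof -
  have P: "prob_space \<mu>" and s: "sets \<mu> = sets (restrict_space borel G)" using H unfolding is_haar_def by auto
  interpret prob_space \<mu> by (rule P)
  show ?thesis
    by (rule integrable_const_bound[where B=B]) (use b haar_space[OF H] cont_meas[OF c s] in auto)
qed

lemma wv_rowop: "wv N x a (rowop c t h) = c a * wv N x (t a) h"
  unfolding wv_def rowop_def by (simp add: sum_distrib_left mult_ac)

lemma wv_sq_sum:
  assumes "h \<in> unitary_group N"
  shows "(\<Sum>a<N. (cmod (wv N x a h))^2) = (\<Sum>j<N. (cmod (x j))^2)"
proof -
  have U: "\<And>k j. k < N \<Longrightarrow> j < N \<Longrightarrow> (\<Sum>a<N. cnj (h a k) * h a j) = (if k = j then 1 else 0)"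
    using assms unfolding unitary_group_def by auto
  have "complex_of_real (\<Sum>a<N. (cmod (wv N x a h))^2) = (\<Sum>a<N. wv N x a h * cnj (wv N x a h))"
    by (simp only: of_real_sum complex_norm_square)
  also have "\<dots> = (\<Sum>a<N. \<Sum>j<N. \<Sum>k<N. x j * cnj (x k) * (cnj (h a k) * h a j))"
  proof (rule sum.cong[OF refl])
    fix a
    have "wv N x a h * cnj (wv N x a h) = (\<Sum>j<N. h a j * x j) * (\<Sum>k<N. cnj (h a k) * cnj (x k))"
      unfolding wv_def by (simp add: cnj_sum)
    also have "\<dots> = (\<Sum>j<N. \<Sum>k<N. (h a j * x j) * (cnj (h a k) * cnj (x k)))"
      by (rule sum_product)
    also have "\<dots> = (\<Sum>j<N. \<Sum>k<N. x j * cnj (x k) * (cnj (h a k) * h a j))"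
      by (intro sum.cong refl) (simp add: algebra_simps)
    finally show "wv N x a h * cnj (wv N x a h) = (\<Sum>j<N. \<Sum>k<N. x j * cnj (x k) * (cnj (h a k) * h a j))" .
  qed
  also have "\<dots> = (\<Sum>j<N. \<Sum>k<N. x j * cnj (x k) * (\<Sum>a<N. cnj (h a k) * h a j))"
  proof -
    have "(\<Sum>a<N. \<Sum>j<N. \<Sum>k<N. x j * cnj (x k) * (cnj (h a k) * h a j))
        = (\<Sum>j<N. \<Sum>a<N. \<Sum>k<N. x j * cnj (x k) * (cnj (h a k) * h a j))"
      by (rule sum.swap)
    also have "\<dots> = (\<Sum>j<N. \<Sum>k<N. \<Sum>a<N. x j * cnj (x k) * (cnj (h a k) * h a j))"
      by (rule sum.cong[OF refl], rule sum.swap)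
    also have "\<dots> = (\<Sum>j<N. \<Sum>k<N. x j * cnj (x k) * (\<Sum>a<N. cnj (h a k) * h a j))"
      by (simp only: sum_distrib_left)
    finally show ?thesis .
  qed
  also have "\<dots> = (\<Sum>j<N. \<Sum>k<N. if k = j then x j * cnj (x k) else 0)"
    by (intro sum.cong refl) (simp add: U)
  also have "\<dots> = (\<Sum>j<N. x j * cnj (x j))" by (simp add: sum.delta)
  also have "\<dots> = complex_of_real (\<Sum>j<N. (cmod (x j))^2)"
    by (simp only: of_real_sum complex_norm_square)
  finally show ?thesis by (rule of_real_eq_iff[THEN iffD1])
qed

lemma wv_prod_integrable:
  assumes H: "is_haar N G \<mu>" and Gc: "G = unitary_group N \<or> G = special_unitary_group N"
  shows "integrable \<mu> (\<lambda>h. wv N x a h * cnj (wv N x b h))"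
proof (rule bc_integrable[OF H, where B = "(\<Sum>j<N. cmod (x j)) * (\<Sum>j<N. cmod (x j))"])
  show "continuous_on UNIV (\<lambda>h. wv N x a h * cnj (wv N x b h))"
    by (intro continuous_intros wv_cont)
  fix h assume "h \<in> G"
  then have hu: "h \<in> unitary_group N" using G_unitary[OF Gc] by blast
  show "norm (wv N x a h * cnj (wv N x b h)) \<le> (\<Sum>j<N. cmod (x j)) * (\<Sum>j<N. cmod (x j))"
    unfolding norm_mult complex_mod_cnj
    by (intro mult_mono wv_bound[OF hu]) (auto intro: sum_nonneg)
qed

lemma wv_sq_integrable:
  assumes H: "is_haar N G \<mu>" and Gc: "G = unitary_group N \<or> G = special_unitary_group N"
  shows "integrable \<mu> (\<lambda>h. (cmod (wv N x a h))^2)"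
proof (rule bc_integrable[OF H, where B = "(\<Sum>j<N. cmod (x j))^2"])
  show "continuous_on UNIV (\<lambda>h. (cmod (wv N x a h))^2)"
    by (intro continuous_intros wv_cont)
  fix h assume "h \<in> G"
  then have hu: "h \<in> unitary_group N" using G_unitary[OF Gc] by blast
  show "norm ((cmod (wv N x a h))^2) \<le> (\<Sum>j<N. cmod (x j))^2"
    using wv_bound[OF hu, of x a] by (simp add: power_mono)
qed

lemma ii_prod: "\<i> * u * (\<i> * v) = - (u * (v::complex))"
  by (metis complex_i_mult_minus mult.assoc mult.left_commute mult_minus_left)

lemma cov_offdiag:
  assumes H: "is_haar N G \<mu>" and Gc: "G = unitary_group N \<or> G = special_unitary_group N"
    and ab: "a < N" "b < N" "a \<noteq> b"
  shows "(\<integral>h. wv N x a h * cnj (wv N x b h) \<partial>\<mu>) = 0"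
proof -
  define c where "c = (\<lambda>i. if i = a then \<i> else if i = b then - \<i> else 1)"
  have c1: "\<And>i. i < N \<Longrightarrow> cmod (c i) = 1" unfolding c_def by auto
  have "(\<Prod>i<N. c i) = (\<Prod>i\<in>{a,b}. c i)"
    by (rule prod.mono_neutral_right) (auto simp: c_def ab)
  also have "\<dots> = 1" using ab by (simp add: c_def)
  finally have pr: "(\<Prod>i<N. c i) * of_int (sign (Transposition.transpose a a)) = 1" by simp
  note go = group_op[OF Gc ab(1) ab(1) c1 pr]
  let ?g = "rowop c (Transposition.transpose a a) (idm N)"
  let ?F = "\<lambda>h. wv N x a h * cnj (wv N x b h)"
  have sets: "sets \<mu> = sets (restrict_space borel G)" using H unfolding is_haar_def by auto
  have Fm: "?F \<in> borel_measurable \<mu>"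
    by (rule cont_meas[OF _ sets]) (intro continuous_intros wv_cont)
  have "(\<integral>h. ?F h \<partial>\<mu>) = (\<integral>h. ?F (mat_mult N ?g h) \<partial>\<mu>)"
  proof (rule haar_inv[OF H go(1) _ Fm])
    fix h assume h: "h \<in> G"
    show "mat_mult N ?g h \<in> G" using go(2)[of h] go(3)[of h] h by simp
  qed
  also have "\<dots> = (\<integral>h. - ?F h \<partial>\<mu>)"
  proof (rule Bochner_Integration.integral_cong[OF refl])
    fix h assume "h \<in> space \<mu>"
    then have "h \<in> G" using haar_space[OF H] by simp
    then have "mat_mult N ?g h = rowop c id h" using go(3) by simp
    then show "?F (mat_mult N ?g h) = - ?F h"
      using ab by (simp add: wv_rowop c_def ii_prod)
  qed
  also have "\<dots> = - (\<integral>h. ?F h \<partial>\<mu>)" by simp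
  finally show ?thesis by simp
qed

lemma cov_diag_eq:
  assumes H: "is_haar N G \<mu>" and Gc: "G = unitary_group N \<or> G = special_unitary_group N"
    and ab: "a < N" "b < N"
  shows "(\<integral>h. (cmod (wv N x a h))^2 \<partial>\<mu>) = (\<integral>h. (cmod (wv N x b h))^2 \<partial>\<mu>)"
proof (cases "a = b")
  case False
  define c where "c = (\<lambda>i. if i = b then -1 else (1::complex))"
  have c1: "\<And>i. i < N \<Longrightarrow> cmod (c i) = 1" unfolding c_def by auto
  have "(\<Prod>i<N. c i) = (\<Prod>i\<in>{b}. c i)"
    by (rule prod.mono_neutral_right) (auto simp: c_def ab)
  also have "\<dots> = -1" by (simp add: c_def)
  finally have pr: "(\<Prod>i<N. c i) * of_int (sign (Transposition.transpose a b)) = 1"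
    using False by (simp add: sign_swap_id)
  note go = group_op[OF Gc ab c1 pr]
  let ?g = "rowop c (Transposition.transpose a b) (idm N)"
  let ?F = "\<lambda>h. (cmod (wv N x a h))^2"
  have sets: "sets \<mu> = sets (restrict_space borel G)" using H unfolding is_haar_def by auto
  have Fm: "?F \<in> borel_measurable \<mu>"
    by (rule cont_meas[OF _ sets]) (intro continuous_intros wv_cont)
  have "(\<integral>h. ?F h \<partial>\<mu>) = (\<integral>h. ?F (mat_mult N ?g h) \<partial>\<mu>)"
  proof (rule haar_inv[OF H go(1) _ Fm])
    fix h assume h: "h \<in> G"
    show "mat_mult N ?g h \<in> G" using go(2)[of h] go(3)[of h] h by simp
  qed
  also have "\<dots> = (\<integral>h. (cmod (wv N x b h))^2 \<partial>\<mu>)"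
  proof (rule Bochner_Integration.integral_cong[OF refl])
    fix h assume "h \<in> space \<mu>"
    then have "h \<in> G" using haar_space[OF H] by simp
    then have "mat_mult N ?g h = rowop c (Transposition.transpose a b) h" using go(3) by simp
    then show "?F (mat_mult N ?g h) = (cmod (wv N x b h))^2"
      using False by (simp add: wv_rowop c_def)
  qed
  finally show ?thesis .
qed simp

lemma cov_diag:
  assumes H: "is_haar N G \<mu>" and Gc: "G = unitary_group N \<or> G = special_unitary_group N"
    and a: "a < N"
  shows "(\<integral>h. (cmod (wv N x a h))^2 \<partial>\<mu>) = (\<Sum>j<N. (cmod (x j))^2) / N"
proof -
  have P: "prob_space \<mu>" using H unfolding is_haar_def by auto
  interpret prob_space \<mu> by (rule P)
  let ?Y = "(\<Sum>j<N. (cmod (x j))^2)"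
  have "(\<Sum>b<N. \<integral>h. (cmod (wv N x b h))^2 \<partial>\<mu>) = (\<integral>h. (\<Sum>b<N. (cmod (wv N x b h))^2) \<partial>\<mu>)"
    by (rule Bochner_Integration.integral_sum[symmetric]) (rule wv_sq_integrable[OF H Gc])
  also have "\<dots> = (\<integral>h. ?Y \<partial>\<mu>)"
  proof (rule Bochner_Integration.integral_cong[OF refl])
    fix h assume "h \<in> space \<mu>"
    then have "h \<in> unitary_group N" using haar_space[OF H] G_unitary[OF Gc] by blast
    then show "(\<Sum>b<N. (cmod (wv N x b h))^2) = ?Y" by (rule wv_sq_sum)
  qed
  also have "\<dots> = ?Y" by (simp add: prob_space)
  finally have 1: "(\<Sum>b<N. \<integral>h. (cmod (wv N x b h))^2 \<partial>\<mu>) = ?Y" .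
  have "(\<Sum>b<N. \<integral>h. (cmod (wv N x b h))^2 \<partial>\<mu>) = (\<Sum>b<N. \<integral>h. (cmod (wv N x a h))^2 \<partial>\<mu>)"
    by (rule sum.cong[OF refl]) (use cov_diag_eq[OF H Gc a, of _ x] in auto)
  also have "\<dots> = N * (\<integral>h. (cmod (wv N x a h))^2 \<partial>\<mu>)" by simp
  finally have "N * (\<integral>h. (cmod (wv N x a h))^2 \<partial>\<mu>) = ?Y" using 1 by simp
  then show ?thesis using a by (simp add: field_simps)
qed

lemma quad_form:
  assumes H: "is_haar N G \<mu>" and Gc: "G = unitary_group N \<or> G = special_unitary_group N"
  shows "(\<integral>h. (cmod (\<Sum>i<N. \<alpha> i * wv N x i h))^2 \<partial>\<mu>)
       = (\<Sum>i<N. (cmod (\<alpha> i))^2) * (\<Sum>j<N. (cmod (x j))^2) / N"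
proof -
  let ?Y = "(\<Sum>j<N. (cmod (x j))^2)"
  let ?S = "\<lambda>h. \<Sum>i<N. \<alpha> i * wv N x i h"
  have SS: "?S h * cnj (?S h) = (\<Sum>i<N. \<Sum>j<N. (\<alpha> i * cnj (\<alpha> j)) * (wv N x i h * cnj (wv N x j h)))" for h
  proof -
    have "?S h * cnj (?S h) = (\<Sum>i<N. \<alpha> i * wv N x i h) * (\<Sum>j<N. cnj (\<alpha> j) * cnj (wv N x j h))"
      by (simp add: cnj_sum)
    also have "\<dots> = (\<Sum>i<N. \<Sum>j<N. (\<alpha> i * wv N x i h) * (cnj (\<alpha> j) * cnj (wv N x j h)))"
      by (rule sum_product)
    also have "\<dots> = (\<Sum>i<N. \<Sum>j<N. (\<alpha> i * cnj (\<alpha> j)) * (wv N x i h * cnj (wv N x j h)))"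
      by (intro sum.cong refl) (simp add: algebra_simps)
    finally show ?thesis .
  qed
  have ii: "(\<integral>h. wv N x i h * cnj (wv N x i h) \<partial>\<mu>) = complex_of_real (?Y / N)" if "i < N" for i
  proof -
    have "(\<integral>h. wv N x i h * cnj (wv N x i h) \<partial>\<mu>) = (\<integral>h. complex_of_real ((cmod (wv N x i h))^2) \<partial>\<mu>)"
      by (simp only: complex_norm_square)
    also have "\<dots> = complex_of_real (\<integral>h. (cmod (wv N x i h))^2 \<partial>\<mu>)"
      by (rule integral_complex_of_real)
    finally show ?thesis using cov_diag[OF H Gc that] by simp
  qed
  have "complex_of_real (\<integral>h. (cmod (?S h))^2 \<partial>\<mu>) = (\<integral>h. complex_of_real ((cmod (?S h))^2) \<partial>\<mu>)"
    by (rule integral_complex_of_real[symmetric])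
  also have "\<dots> = (\<integral>h. (\<Sum>i<N. \<Sum>j<N. (\<alpha> i * cnj (\<alpha> j)) * (wv N x i h * cnj (wv N x j h))) \<partial>\<mu>)"
    by (simp only: complex_norm_square SS)
  also have "\<dots> = (\<Sum>i<N. \<Sum>j<N. (\<alpha> i * cnj (\<alpha> j)) * (\<integral>h. wv N x i h * cnj (wv N x j h) \<partial>\<mu>))"
    by (simp add: Bochner_Integration.integral_sum integrable_sum wv_prod_integrable[OF H Gc])
  also have "\<dots> = (\<Sum>i<N. \<Sum>j<N. if j = i then (\<alpha> i * cnj (\<alpha> i)) * complex_of_real (?Y / N) else 0)"
    by (intro sum.cong refl) (auto simp: ii cov_offdiag[OF H Gc])
  also have "\<dots> = (\<Sum>i<N. (\<alpha> i * cnj (\<alpha> i)) * complex_of_real (?Y / N))"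
    by simp
  also have "\<dots> = complex_of_real ((\<Sum>i<N. (cmod (\<alpha> i))^2) * ?Y / N)"
  proof -
    have "(\<Sum>i<N. (\<alpha> i * cnj (\<alpha> i)) * complex_of_real (?Y / N))
        = complex_of_real (\<Sum>i<N. (cmod (\<alpha> i))^2 * (?Y / N))"
      by (simp only: of_real_sum of_real_mult complex_norm_square)
    also have "(\<Sum>i<N. (cmod (\<alpha> i))^2 * (?Y / N)) = (\<Sum>i<N. (cmod (\<alpha> i))^2) * ?Y / N"
      by (subst sum_distrib_right[symmetric]) simp
    finally show ?thesis .
  qed
  finally show ?thesis by (rule of_real_eq_iff[THEN iffD1])
qed

lemma l2_prod_summable:
  assumes "v \<in> l2" "z \<in> l2"
  shows "summable (\<lambda>i. cnj (v i) * z i)"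
proof (rule summable_norm_cancel, rule summable_comparison_test')
  show "summable (\<lambda>i. ((cmod (v i))^2 + (cmod (z i))^2) / 2)"
    using assms unfolding l2_def by (intro summable_divide summable_add) auto
  fix i :: nat
  have "2 * (cmod (v i) * cmod (z i)) \<le> (cmod (v i))^2 + (cmod (z i))^2"
    using sum_squares_bound[of "cmod (v i)" "cmod (z i)"] by (simp add: mult.assoc)
  then show "norm (norm (cnj (v i) * z i)) \<le> ((cmod (v i))^2 + (cmod (z i))^2) / 2"
    by (simp add: norm_mult)
qed

lemma act_shift: "act N h x (i + N) = x (i + N)"
  unfolding act_def by simp

lemma act_low: "i < N \<Longrightarrow> act N h x i = wv N x i h"
  unfolding act_def wv_def by simp

lemma act_l2:
  assumes "x \<in> l2" shows "act N h x \<in> l2"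
proof -
  have "summable (\<lambda>i. (cmod (x i))^2)" using assms unfolding l2_def by simp
  then have "summable (\<lambda>i. (\<lambda>j. (cmod (x j))^2) (i + N))" by (rule iffD2[OF summable_iff_shift])
  then have "summable (\<lambda>i. (\<lambda>j. (cmod (act N h x j))^2) (i + N))" by (simp only: act_shift)
  then have "summable (\<lambda>j. (cmod (act N h x j))^2)" by (rule iffD1[OF summable_iff_shift])
  then show ?thesis unfolding l2_def by simp
qed

definition tailv :: "(nat \<Rightarrow> complex) \<Rightarrow> (nat \<Rightarrow> complex) \<Rightarrow> nat \<Rightarrow> complex" where
  "tailv v x N = (\<Sum>k. cnj (v (k + N)) * x (k + N))"

lemma inner_act:
  assumes "v \<in> l2" "x \<in> l2"
  shows "l2_inner v (act N h x) = (\<Sum>i<N. cnj (v i) * wv N x i h) + tailv v x N"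
proof -
  have s: "summable (\<lambda>i. cnj (v i) * act N h x i)"
    by (rule l2_prod_summable[OF assms(1) act_l2[OF assms(2)]])
  have 1: "(\<lambda>n. cnj (v (n + N)) * act N h x (n + N)) = (\<lambda>n. cnj (v (n + N)) * x (n + N))"
    by (simp only: act_shift)
  have 2: "(\<Sum>i<N. cnj (v i) * act N h x i) = (\<Sum>i<N. cnj (v i) * wv N x i h)"
    by (rule sum.cong) (simp_all add: act_low)
  show ?thesis
    unfolding l2_inner_def suminf_split_initial_segment[OF s, of N] 1 2 tailv_def
    by (rule add.commute)
qed

lemma tailv_lim:
  assumes "v \<in> l2" "x \<in> l2"
  shows "(\<lambda>N. tailv v x N) \<longlonglongrightarrow> 0"
proof -
  let ?g = "\<lambda>i. cnj (v i) * x i"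
  have s: "summable ?g" by (rule l2_prod_summable[OF assms])
  have "tailv v x N = suminf ?g - (\<Sum>i<N. ?g i)" for N
    using suminf_split_initial_segment[OF s, of N] unfolding tailv_def by simp
  moreover have "(\<lambda>N. suminf ?g - (\<Sum>i<N. ?g i)) \<longlonglongrightarrow> suminf ?g - suminf ?g"
    by (intro tendsto_intros summable_LIMSEQ s)
  ultimately show ?thesis by simp
qed

lemma act_norm:
  assumes "x \<in> l2" "h \<in> unitary_group N"
  shows "(\<Sum>i. (cmod (act N h x i))^2) = (\<Sum>i. (cmod (x i))^2)"
proof -
  have sx: "summable (\<lambda>i. (cmod (x i))^2)" using assms unfolding l2_def by simp
  have sa: "summable (\<lambda>i. (cmod (act N h x i))^2)" using act_l2[OF assms(1)] unfolding l2_def by simp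
  have 1: "(\<lambda>n. (cmod (act N h x (n + N)))^2) = (\<lambda>n. (cmod (x (n + N)))^2)"
    by (simp only: act_shift)
  have 2: "(\<Sum>i<N. (cmod (act N h x i))^2) = (\<Sum>i<N. (cmod (wv N x i h))^2)"
    by (rule sum.cong) (simp_all add: act_low)
  show ?thesis
    unfolding suminf_split_initial_segment[OF sx, of N] suminf_split_initial_segment[OF sa, of N] 1 2
      wv_sq_sum[OF assms(2), of x] ..
qed

lemma act_Kball:
  assumes "x \<in> Kball" "h \<in> unitary_group N"
  shows "act N h x \<in> Kball"
  using assms act_l2 act_norm unfolding Kball_def l2_norm_def by auto

lemma sq_sum_le_suminf:
  assumes "x \<in> l2" shows "(\<Sum>i<N. (cmod (x i))^2) \<le> (\<Sum>i. (cmod (x i))^2)"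
  using assms unfolding l2_def by (intro sum_le_suminf) auto

lemma S_bound:
  assumes "h \<in> unitary_group N"
  shows "cmod (\<Sum>i<N. cnj (v i) * wv N x i h) \<le> (\<Sum>i<N. cmod (v i)) * (\<Sum>j<N. cmod (x j))"
proof -
  have "cmod (\<Sum>i<N. cnj (v i) * wv N x i h) \<le> (\<Sum>i<N. cmod (cnj (v i) * wv N x i h))" by (rule norm_sum)
  also have "\<dots> \<le> (\<Sum>i<N. cmod (v i) * (\<Sum>j<N. cmod (x j)))"
    by (rule sum_mono) (simp add: norm_mult mult_left_mono wv_bound[OF assms])
  also have "\<dots> = (\<Sum>i<N. cmod (v i)) * (\<Sum>j<N. cmod (x j))" by (simp add: sum_distrib_right)
  finally show ?thesis .
qed

lemma key_bound:
  assumes H: "is_haar N G \<mu>" and Gc: "G = unitary_group N \<or> G = special_unitary_group N"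
    and x: "x \<in> l2" and v: "v \<in> l2" and N: "N > 0"
  shows "(\<integral>h. (cmod (l2_inner v (act N h x)))^2 \<partial>\<mu>)
      \<le> 2 * ((\<Sum>i. (cmod (v i))^2) * (\<Sum>i. (cmod (x i))^2)) / N + 2 * (cmod (tailv v x N))^2"
proof -
  have P: "prob_space \<mu>" using H unfolding is_haar_def by auto
  interpret prob_space \<mu> by (rule P)
  let ?S = "\<lambda>h. \<Sum>i<N. cnj (v i) * wv N x i h"
  let ?t = "tailv v x N"
  let ?B = "(\<Sum>i<N. cmod (v i)) * (\<Sum>j<N. cmod (x j))"
  have Sc: "continuous_on UNIV ?S" by (intro continuous_intros wv_cont)
  have SB: "h \<in> G \<Longrightarrow> cmod (?S h) \<le> ?B" for h
    using S_bound G_unitary[OF Gc] by blast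
  have B0: "0 \<le> ?B" by (intro mult_nonneg_nonneg sum_nonneg) auto
  have i1: "integrable \<mu> (\<lambda>h. (cmod (?S h + ?t))^2)"
  proof (rule bc_integrable[OF H, where B = "(?B + cmod ?t)^2"])
    show "continuous_on UNIV (\<lambda>h. (cmod (?S h + ?t))^2)" by (intro continuous_intros Sc)
    fix h assume "h \<in> G"
    then have "cmod (?S h + ?t) \<le> ?B + cmod ?t" using SB[of h] norm_triangle_ineq[of "?S h" ?t] by linarith
    then show "norm ((cmod (?S h + ?t))^2) \<le> (?B + cmod ?t)^2" by (simp add: power_mono)
  qed
  have i2: "integrable \<mu> (\<lambda>h. (cmod (?S h))^2)"
  proof (rule bc_integrable[OF H, where B = "?B^2"])
    show "continuous_on UNIV (\<lambda>h. (cmod (?S h))^2)" by (intro continuous_intros Sc)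
    fix h assume "h \<in> G"
    then show "norm ((cmod (?S h))^2) \<le> ?B^2" using SB by (simp add: power_mono)
  qed
  have "(\<integral>h. (cmod (l2_inner v (act N h x)))^2 \<partial>\<mu>) = (\<integral>h. (cmod (?S h + ?t))^2 \<partial>\<mu>)"
    by (simp only: inner_act[OF v x])
  also have "\<dots> \<le> (\<integral>h. 2 * (cmod (?S h))^2 + 2 * (cmod ?t)^2 \<partial>\<mu>)"
  proof (rule integral_mono[OF i1])
    show "integrable \<mu> (\<lambda>h. 2 * (cmod (?S h))^2 + 2 * (cmod ?t)^2)"
      using i2 by (intro Bochner_Integration.integrable_add integrable_mult_right integrable_const) auto
    fix h
    have "cmod (?S h + ?t) \<le> cmod (?S h) + cmod ?t" by (rule norm_triangle_ineq)
    then have "(cmod (?S h + ?t))^2 \<le> (cmod (?S h) + cmod ?t)^2" by (simp add: power_mono)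
    also have "\<dots> \<le> 2 * (cmod (?S h))^2 + 2 * (cmod ?t)^2"
      by (smt (verit, best) sum_squares_bound power2_sum)
    finally show "(cmod (?S h + ?t))^2 \<le> 2 * (cmod (?S h))^2 + 2 * (cmod ?t)^2" .
  qed
  also have "\<dots> = 2 * (\<integral>h. (cmod (?S h))^2 \<partial>\<mu>) + 2 * (cmod ?t)^2"
    using i2 by (simp add: prob_space)
  also have "(\<integral>h. (cmod (?S h))^2 \<partial>\<mu>) = (\<Sum>i<N. (cmod (cnj (v i)))^2) * (\<Sum>j<N. (cmod (x j))^2) / N"
    by (rule quad_form[OF H Gc])
  also have "\<dots> \<le> ((\<Sum>i. (cmod (v i))^2) * (\<Sum>i. (cmod (x i))^2)) / N"
    using N sq_sum_le_suminf[OF v] v x unfolding l2_def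
    by (intro divide_right_mono mult_mono sq_sum_le_suminf[OF x])
      (auto intro: sum_nonneg intro!: suminf_nonneg)
  finally show ?thesis by simp
qed

lemma key_limit:
  assumes Gc: "\<And>N. G N = unitary_group N \<or> G N = special_unitary_group N"
    and H: "\<And>N. is_haar N (G N) (haar N)" and x: "x \<in> l2" and v: "v \<in> l2"
  shows "(\<lambda>N. \<integral>h. (cmod (l2_inner v (act N h x)))^2 \<partial>haar N) \<longlonglongrightarrow> 0"
proof (rule tendsto_sandwich[of "\<lambda>_. 0" _ _ "\<lambda>N. 2 * ((\<Sum>i. (cmod (v i))^2) * (\<Sum>i. (cmod (x i))^2)) / real N + 2 * (cmod (tailv v x N))^2"])
  show "\<forall>\<^sub>F N in sequentially. 0 \<le> (\<integral>h. (cmod (l2_inner v (act N h x)))^2 \<partial>haar N)"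
    by (intro always_eventually allI integral_nonneg_AE) auto
  show "\<forall>\<^sub>F N in sequentially. (\<integral>h. (cmod (l2_inner v (act N h x)))^2 \<partial>haar N)
     \<le> 2 * ((\<Sum>i. (cmod (v i))^2) * (\<Sum>i. (cmod (x i))^2)) / real N + 2 * (cmod (tailv v x N))^2"
    using eventually_gt_at_top[of 0] by eventually_elim (rule key_bound[OF H Gc x v])
  show "(\<lambda>_. 0::real) \<longlonglongrightarrow> 0" by simp
  have t: "(\<lambda>N. cmod (tailv v x N)) \<longlonglongrightarrow> 0" using tailv_lim[OF v x] by (rule tendsto_norm_zero)
  have "(\<lambda>N. 2 * ((\<Sum>i. (cmod (v i))^2) * (\<Sum>i. (cmod (x i))^2)) / real N + 2 * (cmod (tailv v x N))^2)
     \<longlonglongrightarrow> 0 + 2 * 0^2"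
    by (intro tendsto_add lim_const_over_n tendsto_mult tendsto_const tendsto_power t)
  then show "(\<lambda>N. 2 * ((\<Sum>i. (cmod (v i))^2) * (\<Sum>i. (cmod (x i))^2)) / real N + 2 * (cmod (tailv v x N))^2)
     \<longlonglongrightarrow> 0" by simp
qed

definition subb :: "(nat \<Rightarrow> complex) set set" where
  "subb = {{x \<in> l2. l2_inner v x \<in> U} | v U. v \<in> l2 \<and> open U}"

lemma weak_top_eq: "weak_top = topology_generated_by subb"
  unfolding weak_top_def subb_def ..

lemma zero_l2: "(\<lambda>_. 0) \<in> l2" unfolding l2_def by simp

lemma topspace_weak: "topspace weak_top = l2"
proof -
  have "\<Union>subb = l2"
  proof
    show "\<Union>subb \<subseteq> l2" unfolding subb_def by auto
    show "l2 \<subseteq> \<Union>subb"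
    proof
      fix z assume "z \<in> l2"
      moreover have "{x \<in> l2. l2_inner (\<lambda>_. 0) x \<in> UNIV} \<in> subb"
        unfolding subb_def using zero_l2 by blast
      ultimately show "z \<in> \<Union>subb" by blast
    qed
  qed
  then show ?thesis unfolding weak_top_eq by simp
qed

lemma Kball_l2: "Kball \<subseteq> l2" unfolding Kball_def by auto

lemma topspace_K: "topspace K_top = Kball"
  unfolding K_top_def using topspace_weak Kball_l2 by auto

lemma gen_nbhd:
  assumes "generate_topology_on subb W"
  shows "z \<in> W \<Longrightarrow> z \<in> l2 \<Longrightarrow> \<exists>V \<delta>. finite V \<and> V \<subseteq> l2 \<and> \<delta> > 0 \<and>
     (\<forall>w\<in>l2. (\<forall>v\<in>V. cmod (l2_inner v w - l2_inner v z) < \<delta>) \<longrightarrow> w \<in> W)"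
  using assms
proof (induction arbitrary: z)
  case Empty
  then show ?case by simp
next
  case (Int a b)
  have za: "z \<in> a" and zb: "z \<in> b" using Int.prems(1) by auto
  obtain V1 d1 where 1: "finite V1" "V1 \<subseteq> l2" "d1 > 0"
    "\<forall>w\<in>l2. (\<forall>v\<in>V1. cmod (l2_inner v w - l2_inner v z) < d1) \<longrightarrow> w \<in> a"
    using Int.IH(1)[OF za Int.prems(2)] by blast
  obtain V2 d2 where 2: "finite V2" "V2 \<subseteq> l2" "d2 > 0"
    "\<forall>w\<in>l2. (\<forall>v\<in>V2. cmod (l2_inner v w - l2_inner v z) < d2) \<longrightarrow> w \<in> b"
    using Int.IH(2)[OF zb Int.prems(2)] by blast
  show ?case
  proof (intro exI conjI)
    show "finite (V1 \<union> V2)" "V1 \<union> V2 \<subseteq> l2" "min d1 d2 > 0" using 1 2 by auto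
    show "\<forall>w\<in>l2. (\<forall>v\<in>V1 \<union> V2. cmod (l2_inner v w - l2_inner v z) < min d1 d2) \<longrightarrow> w \<in> a \<inter> b"
    proof (intro ballI impI)
      fix w assume w: "w \<in> l2" and c: "\<forall>v\<in>V1 \<union> V2. cmod (l2_inner v w - l2_inner v z) < min d1 d2"
      then have "w \<in> a" using 1(4) by auto
      moreover have "w \<in> b" using 2(4) w c by auto
      ultimately show "w \<in> a \<inter> b" by blast
    qed
  qed
next
  case (UN K)
  then obtain k where "k \<in> K" "z \<in> k" by blast
  then obtain V d where Vd: "finite V" "V \<subseteq> l2" "d > 0"
    "\<forall>w\<in>l2. (\<forall>v\<in>V. cmod (l2_inner v w - l2_inner v z) < d) \<longrightarrow> w \<in> k"
    using UN.IH[OF \<open>k \<in> K\<close> _ UN.prems(2)] by blast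
  show ?case
  proof (intro exI conjI)
    show "finite V" "V \<subseteq> l2" "d > 0" by (rule Vd)+
    show "\<forall>w\<in>l2. (\<forall>v\<in>V. cmod (l2_inner v w - l2_inner v z) < d) \<longrightarrow> w \<in> \<Union>K"
      using Vd(4) \<open>k \<in> K\<close> by blast
  qed
next
  case (Basis s)
  then obtain v U where s: "s = {x \<in> l2. l2_inner v x \<in> U}" "v \<in> l2" "open U"
    unfolding subb_def by blast
  then have "l2_inner v z \<in> U" using Basis.prems by auto
  then obtain d where d: "d > 0" "ball (l2_inner v z) d \<subseteq> U"
    using s(3) open_contains_ball by blast
  show ?case
  proof (intro exI conjI)
    show "finite {v}" "{v} \<subseteq> l2" "d > 0" using s d by auto
    show "\<forall>w\<in>l2. (\<forall>u\<in>{v}. cmod (l2_inner u w - l2_inner u z) < d) \<longrightarrow> w \<in> s"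
    proof (intro ballI impI)
      fix w assume w: "w \<in> l2" and c: "\<forall>u\<in>{v}. cmod (l2_inner u w - l2_inner u z) < d"
      then have "dist (l2_inner v z) (l2_inner v w) < d" by (simp add: dist_norm norm_minus_commute)
      then have "l2_inner v w \<in> U" using d(2) by auto
      then show "w \<in> s" using w s(1) by simp
    qed
  qed
qed

lemma cont_nbhd:
  assumes f: "continuous_map K_top euclideanreal f" and z: "z \<in> Kball" and e: "e > 0"
  shows "\<exists>V \<delta>. finite V \<and> V \<subseteq> l2 \<and> \<delta> > 0 \<and>
     (\<forall>w\<in>Kball. (\<forall>v\<in>V. cmod (l2_inner v w - l2_inner v z) < \<delta>) \<longrightarrow> \<bar>f w - f z\<bar> < e)"
proof -
  have "openin K_top {w \<in> topspace K_top. f w \<in> ball (f z) e}"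
    using f unfolding continuous_map by auto
  then have "openin K_top {w \<in> Kball. f w \<in> ball (f z) e}" by (simp only: topspace_K)
  then have "\<exists>T. openin weak_top T \<and> {w \<in> Kball. f w \<in> ball (f z) e} = T \<inter> Kball"
    unfolding K_top_def openin_subtopology .
  then obtain T where T: "openin weak_top T" "{w \<in> Kball. f w \<in> ball (f z) e} = T \<inter> Kball"
    by (elim exE conjE)
  have "z \<in> {w \<in> Kball. f w \<in> ball (f z) e}" using z e by simp
  then have zT: "z \<in> T" using T(2) by blast
  have gT: "generate_topology_on subb T"
    using T(1) unfolding weak_top_eq by (rule openin_topology_generated_by)
  have zl: "z \<in> l2" using z Kball_l2 by blast
  obtain V d where V: "finite V" "V \<subseteq> l2" "d > 0"
    "\<forall>w\<in>l2. (\<forall>v\<in>V. cmod (l2_inner v w - l2_inner v z) < d) \<longrightarrow> w \<in> T"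
    using gen_nbhd[OF gT zT zl] by blast
  show ?thesis
  proof (intro exI conjI)
    show "finite V" "V \<subseteq> l2" "d > 0" by (rule V)+
    show "\<forall>w\<in>Kball. (\<forall>v\<in>V. cmod (l2_inner v w - l2_inner v z) < d) \<longrightarrow> \<bar>f w - f z\<bar> < e"
    proof (intro ballI impI)
      fix w assume w: "w \<in> Kball" and c: "\<forall>v\<in>V. cmod (l2_inner v w - l2_inner v z) < d"
      have "w \<in> l2" using w Kball_l2 by blast
      then have "w \<in> T" using V(4) c by blast
      then have "w \<in> {w \<in> Kball. f w \<in> ball (f z) e}" using T(2) w by blast
      then have "dist (f z) (f w) < e" by simp
      then show "\<bar>f w - f z\<bar> < e" by (simp add: dist_real_def abs_minus_commute)
    qed
  qed
qed

lemma seq_cont: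
  assumes f: "continuous_map K_top euclideanreal f" and z: "z \<in> Kball"
    and zn: "\<And>n. zs n \<in> Kball" and conv: "\<And>v. v \<in> l2 \<Longrightarrow> (\<lambda>n. l2_inner v (zs n)) \<longlonglongrightarrow> l2_inner v z"
  shows "(\<lambda>n. f (zs n)) \<longlonglongrightarrow> f z"
proof (rule tendstoI)
  fix e :: real assume e: "e > 0"
  obtain V d where V: "finite V" "V \<subseteq> l2" "d > 0"
    "\<forall>w\<in>Kball. (\<forall>v\<in>V. cmod (l2_inner v w - l2_inner v z) < d) \<longrightarrow> \<bar>f w - f z\<bar> < e"
    using cont_nbhd[OF f z e] by blast
  have "\<forall>\<^sub>F n in sequentially. \<forall>v\<in>V. cmod (l2_inner v (zs n) - l2_inner v z) < d"
  proof (rule eventually_ball_finite[OF V(1)], rule ballI)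
    fix v assume "v \<in> V"
    then have "(\<lambda>n. l2_inner v (zs n)) \<longlonglongrightarrow> l2_inner v z" using V(2) conv by blast
    from tendstoD[OF this V(3)]
    show "\<forall>\<^sub>F n in sequentially. cmod (l2_inner v (zs n) - l2_inner v z) < d"
      by (simp add: dist_norm)
  qed
  then show "\<forall>\<^sub>F n in sequentially. dist (f (zs n)) (f z) < e"
    by eventually_elim (use V(4) zn in \<open>auto simp: dist_real_def\<close>)
qed

lemma borel_K_space: "space (borel_of_top K_top) = Kball"
  and borel_K_sets: "sets (borel_of_top K_top) = sigma_sets Kball {U. openin K_top U}"
proof -
  have "{U. openin K_top U} \<subseteq> Pow (topspace K_top)" using openin_subset by auto
  then show "space (borel_of_top K_top) = Kball" "sets (borel_of_top K_top) = sigma_sets Kball {U. openin K_top U}"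
    unfolding borel_of_top_def topspace_K by (simp_all add: space_measure_of sets_measure_of)
qed

lemma f_meas:
  assumes f: "continuous_map K_top euclideanreal f"
  shows "f \<in> borel_measurable (borel_of_top K_top)"
proof (rule borel_measurableI)
  fix S :: "real set" assume "open S"
  then have "openin K_top {x \<in> topspace K_top. f x \<in> S}" using f unfolding continuous_map by auto
  moreover have "f -` S \<inter> space (borel_of_top K_top) = {x \<in> topspace K_top. f x \<in> S}"
    using borel_K_space topspace_K by auto
  ultimately show "f -` S \<inter> space (borel_of_top K_top) \<in> sets (borel_of_top K_top)"
    unfolding borel_K_sets by auto
qed

lemma act_open_pre:
  assumes "generate_topology_on subb W" and x: "x \<in> l2"
  shows "open {h. act N h x \<in> W}"
  using assms(1)
proof induction
  case Empty then show ?case by simp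
next
  case (Int a b)
  have "{h. act N h x \<in> a \<inter> b} = {h. act N h x \<in> a} \<inter> {h. act N h x \<in> b}" by auto
  then show ?case using Int by (simp add: open_Int)
next
  case (UN K)
  have "{h. act N h x \<in> \<Union>K} = (\<Union>k\<in>K. {h. act N h x \<in> k})" by auto
  then show ?case using UN by auto
next
  case (Basis s)
  then obtain v U where s: "s = {x \<in> l2. l2_inner v x \<in> U}" "v \<in> l2" "open U"
    unfolding subb_def by blast
  have "{h. act N h x \<in> s} = (\<lambda>h. (\<Sum>i<N. cnj (v i) * wv N x i h) + tailv v x N) -` U"
    using s act_l2[OF x] inner_act[OF s(2) x] by auto
  also have "open \<dots>"
    by (intro open_vimage s(3) continuous_intros wv_cont)
  finally show ?case .
qed

lemma act_meas:
  assumes H: "is_haar N G \<mu>" and Gc: "G = unitary_group N \<or> G = special_unitary_group N"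
    and x: "x \<in> Kball"
  shows "(\<lambda>h. act N h x) \<in> measurable \<mu> (borel_of_top K_top)"
  unfolding borel_of_top_def
proof (rule measurable_measure_of)
  have sp: "space \<mu> = G" by (rule haar_space[OF H])
  have sets: "sets \<mu> = sets (restrict_space borel G)" using H unfolding is_haar_def by auto
  show "{U. openin K_top U} \<subseteq> Pow (topspace K_top)" using openin_subset by auto
  show "(\<lambda>h. act N h x) \<in> space \<mu> \<rightarrow> topspace K_top"
    unfolding sp topspace_K using act_Kball[OF x] G_unitary[OF Gc] by auto
  fix U assume "U \<in> {U. openin K_top U}"
  then obtain T where T: "openin weak_top T" "U = T \<inter> Kball"
    unfolding K_top_def openin_subtopology by auto
  have o: "open {h. act N h x \<in> T}"
    by (rule act_open_pre[OF _ set_mp[OF Kball_l2 x]])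
      (use T(1) in \<open>simp add: weak_top_eq openin_topology_generated_by_iff\<close>)
  have "(\<lambda>h. act N h x) -` U \<inter> space \<mu> = G \<inter> {h. act N h x \<in> T}"
    unfolding sp T(2) using act_Kball[OF x] G_unitary[OF Gc] by auto
  also have "\<dots> \<in> sets (restrict_space borel G)"
    unfolding sets_restrict_space using o by auto
  finally show "(\<lambda>h. act N h x) -` U \<inter> space \<mu> \<in> sets \<mu>" using sets by simp
qed

lemma kball_sum:
  assumes "x \<in> Kball"
  shows "summable (\<lambda>i. (cmod (x i))^2)" "(\<Sum>i. (cmod (x i))^2) \<le> 1"
  using assms unfolding Kball_def l2_def l2_norm_def by auto

lemma shift_le:
  assumes "summable (\<lambda>i. (cmod (x i))^2)"
  shows "(\<Sum>n. (cmod (x (n + M)))^2) \<le> (\<Sum>i. (cmod (x i))^2)"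
proof -
  have "(\<Sum>i. (cmod (x i))^2) = (\<Sum>n. (cmod (x (n + M)))^2) + (\<Sum>i<M. (cmod (x i))^2)"
    by (rule suminf_split_initial_segment[OF assms])
  moreover have "0 \<le> (\<Sum>i<M. (cmod (x i))^2)" by (rule sum_nonneg) auto
  ultimately show ?thesis by linarith
qed

lemma amgm_bound:
  assumes t: "t > 0"
  shows "cmod a * cmod b \<le> t / 2 * (cmod a)^2 + 1 / (2 * t) * (cmod b)^2"
proof -
  have "0 \<le> (t * cmod a - cmod b)^2" by simp
  then have "2 * t * (cmod a * cmod b) \<le> t^2 * (cmod a)^2 + (cmod b)^2"
    by (simp add: power2_diff power_mult_distrib algebra_simps)
  then have "(2 * t) * (cmod a * cmod b) \<le> (2 * t) * (t / 2 * (cmod a)^2 + 1 / (2 * t) * (cmod b)^2)"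
    using t by (simp add: algebra_simps power2_eq_square)
  then show ?thesis using t by (simp add: mult_le_cancel_left_pos)
qed

lemma tail_est:
  assumes a: "summable (\<lambda>i. (cmod (a i))^2)" and b: "summable (\<lambda>i. (cmod (b i))^2)" and t: "t > 0"
  shows "cmod (\<Sum>i. a i * b i) \<le> t / 2 * (\<Sum>i. (cmod (a i))^2) + 1 / (2 * t) * (\<Sum>i. (cmod (b i))^2)"
proof -
  have sg: "summable (\<lambda>i. t / 2 * (cmod (a i))^2 + 1 / (2 * t) * (cmod (b i))^2)"
    using a b by (intro summable_add summable_mult) auto
  have pw: "norm (a i * b i) \<le> t / 2 * (cmod (a i))^2 + 1 / (2 * t) * (cmod (b i))^2" for i
    using amgm_bound[OF t] by (simp add: norm_mult)
  have sn: "summable (\<lambda>i. norm (a i * b i))"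
    by (rule summable_comparison_test'[OF sg]) (use pw in simp)
  have "cmod (\<Sum>i. a i * b i) \<le> (\<Sum>i. norm (a i * b i))" by (rule summable_norm[OF sn])
  also have "\<dots> \<le> (\<Sum>i. t / 2 * (cmod (a i))^2 + 1 / (2 * t) * (cmod (b i))^2)"
    by (rule suminf_le[OF pw sn sg])
  also have "\<dots> = t / 2 * (\<Sum>i. (cmod (a i))^2) + 1 / (2 * t) * (\<Sum>i. (cmod (b i))^2)"
  proof -
    have "(\<Sum>i. t / 2 * (cmod (a i))^2 + 1 / (2 * t) * (cmod (b i))^2)
        = (\<Sum>i. t / 2 * (cmod (a i))^2) + (\<Sum>i. 1 / (2 * t) * (cmod (b i))^2)"
      by (rule suminf_add[symmetric]) (rule summable_mult, fact a, rule summable_mult, fact b)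
    also have "\<dots> = t / 2 * (\<Sum>i. (cmod (a i))^2) + 1 / (2 * t) * (\<Sum>i. (cmod (b i))^2)"
      by (simp only: suminf_mult[OF a] suminf_mult[OF b])
    finally show ?thesis .
  qed
  finally show ?thesis .
qed

lemma shift_summable:
  assumes "summable (\<lambda>i. (cmod (x i))^2)"
  shows "summable (\<lambda>n. (cmod (x (n + M)))^2)"
  by (rule iffD2[OF summable_iff_shift assms])

lemma sq_diff_bound: "(cmod (u - w))^2 \<le> 2 * (cmod u)^2 + 2 * (cmod w)^2"
proof -
  have "cmod (u - w) \<le> cmod u + cmod w" by (rule norm_triangle_ineq4)
  then have "(cmod (u - w))^2 \<le> (cmod u + cmod w)^2" by (simp add: power_mono)
  also have "\<dots> \<le> 2 * (cmod u)^2 + 2 * (cmod w)^2"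
    by (smt (verit, best) sum_squares_bound power2_sum)
  finally show ?thesis .
qed

lemma weak_conv:
  assumes y: "\<And>k. y k \<in> Kball" and z: "z \<in> Kball" and c: "\<And>i. (\<lambda>k. y k i) \<longlonglongrightarrow> z i"
    and v: "v \<in> l2"
  shows "(\<lambda>k. l2_inner v (y k)) \<longlonglongrightarrow> l2_inner v z"
proof (rule LIM_zero_cancel, rule tendstoI)
  fix e :: real assume e: "e > 0"
  have sv: "summable (\<lambda>i. (cmod (v i))^2)" using v unfolding l2_def by simp
  have sy: "\<And>k. summable (\<lambda>i. (cmod (y k i))^2)" "\<And>k. (\<Sum>i. (cmod (y k i))^2) \<le> 1"
    using kball_sum[OF y] by auto
  have sz: "summable (\<lambda>i. (cmod (z i))^2)" "(\<Sum>i. (cmod (z i))^2) \<le> 1"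
    using kball_sum[OF z] by auto
  have yl: "\<And>k. y k \<in> l2" and zl: "z \<in> l2" using y z Kball_l2 by auto
  have VT: "(\<lambda>M. \<Sum>n. (cmod (v (n + M)))^2) \<longlonglongrightarrow> 0"
  proof -
    have "(\<Sum>n. (cmod (v (n + M)))^2) = (\<Sum>i. (cmod (v i))^2) - (\<Sum>i<M. (cmod (v i))^2)" for M
      using suminf_split_initial_segment[OF sv, of M] by simp
    moreover have "(\<lambda>M. (\<Sum>i. (cmod (v i))^2) - (\<Sum>i<M. (cmod (v i))^2)) \<longlonglongrightarrow>
        (\<Sum>i. (cmod (v i))^2) - (\<Sum>i. (cmod (v i))^2)"
      by (intro tendsto_intros summable_LIMSEQ sv)
    ultimately show ?thesis by simp
  qed
  have "e^2 / 16 > 0" using e by simp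
  from order_tendstoD(2)[OF VT this] obtain M where M: "(\<Sum>n. (cmod (v (n + M)))^2) < e^2 / 16"
    unfolding eventually_sequentially by auto
  define t where "t = 8 / e"
  have t: "t > 0" using e by (simp add: t_def)
  define d where "d = (\<lambda>k i. y k i - z i)"
  have dec: "l2_inner v (y k) - l2_inner v z
      = (\<Sum>i<M. cnj (v i) * d k i) + (\<Sum>n. cnj (v (n + M)) * d k (n + M))" for k
  proof -
    have s1: "summable (\<lambda>i. cnj (v i) * y k i)" by (rule l2_prod_summable[OF v yl])
    have s2: "summable (\<lambda>i. cnj (v i) * z i)" by (rule l2_prod_summable[OF v zl])
    have "l2_inner v (y k) - l2_inner v z = (\<Sum>i. cnj (v i) * y k i - cnj (v i) * z i)"
      unfolding l2_inner_def by (rule suminf_diff[OF s1 s2])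
    also have "\<dots> = (\<Sum>i. cnj (v i) * d k i)" by (simp add: d_def algebra_simps)
    also have "\<dots> = (\<Sum>n. cnj (v (n + M)) * d k (n + M)) + (\<Sum>i<M. cnj (v i) * d k i)"
    proof (rule suminf_split_initial_segment)
      have "summable (\<lambda>i. cnj (v i) * y k i - cnj (v i) * z i)" by (rule summable_diff[OF s1 s2])
      then show "summable (\<lambda>i. cnj (v i) * d k i)" by (simp add: d_def algebra_simps)
    qed
    finally show ?thesis by simp
  qed
  have tail: "cmod (\<Sum>n. cnj (v (n + M)) * d k (n + M)) < e / 2" for k
  proof -
    have sa: "summable (\<lambda>n. (cmod (cnj (v (n + M))))^2)" using shift_summable[OF sv, of M] by simp
    have sb2: "summable (\<lambda>n. 2 * (cmod (y k (n + M)))^2 + 2 * (cmod (z (n + M)))^2)"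
      using shift_summable[OF sy(1)[of k], of M] shift_summable[OF sz(1), of M]
      by (intro summable_add summable_mult) auto
    have pb: "(cmod (d k (n + M)))^2 \<le> 2 * (cmod (y k (n + M)))^2 + 2 * (cmod (z (n + M)))^2" for n
      unfolding d_def by (rule sq_diff_bound)
    have sb: "summable (\<lambda>n. (cmod (d k (n + M)))^2)"
      by (rule summable_comparison_test'[OF sb2]) (use pb in simp)
    have "(\<Sum>n. (cmod (d k (n + M)))^2) \<le> (\<Sum>n. 2 * (cmod (y k (n + M)))^2 + 2 * (cmod (z (n + M)))^2)"
      by (rule suminf_le[OF pb sb sb2])
    also have "\<dots> = 2 * (\<Sum>n. (cmod (y k (n + M)))^2) + 2 * (\<Sum>n. (cmod (z (n + M)))^2)"
    proof -
      have a1: "summable (\<lambda>n. (cmod (y k (n + M)))^2)" by (rule shift_summable[OF sy(1)[of k]])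
      have a2: "summable (\<lambda>n. (cmod (z (n + M)))^2)" by (rule shift_summable[OF sz(1)])
      show ?thesis
        by (subst suminf_add[symmetric]) (use a1 a2 in \<open>auto intro: summable_mult simp: suminf_mult\<close>)
    qed
    also have "\<dots> \<le> 2 * 1 + 2 * 1"
      using shift_le[OF sy(1)[of k], of M] shift_le[OF sz(1), of M] sy(2)[of k] sz(2) by linarith
    finally have bd: "(\<Sum>n. (cmod (d k (n + M)))^2) \<le> 4" by simp
    have A: "cmod (\<Sum>n. cnj (v (n + M)) * d k (n + M))
        \<le> t / 2 * (\<Sum>n. (cmod (cnj (v (n + M))))^2) + 1 / (2 * t) * (\<Sum>n. (cmod (d k (n + M)))^2)"
      by (rule tail_est[OF sa sb t])
    have B: "t / 2 * (\<Sum>n. (cmod (cnj (v (n + M))))^2) < t / 2 * (e^2 / 16)"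
      using M t by simp
    have C: "1 / (2 * t) * (\<Sum>n. (cmod (d k (n + M)))^2) \<le> 1 / (2 * t) * 4"
      using bd t by (intro mult_left_mono) auto
    have E1: "t / 2 * (e^2 / 16) = e / 4" unfolding t_def using e by (simp add: power2_eq_square)
    have E2: "1 / (2 * t) * 4 = e / 4" unfolding t_def using e by simp
    show ?thesis using A B C E1 E2 by linarith
  qed
  have "(\<lambda>k. \<Sum>i<M. cnj (v i) * d k i) \<longlonglongrightarrow> (\<Sum>i<M. cnj (v i) * (z i - z i))"
    unfolding d_def by (intro tendsto_intros c)
  then have "(\<lambda>k. \<Sum>i<M. cnj (v i) * d k i) \<longlonglongrightarrow> 0" by simp
  from tendstoD[OF this, of "e / 2"] e
  have "\<forall>\<^sub>F k in sequentially. cmod (\<Sum>i<M. cnj (v i) * d k i) < e / 2" by (simp add: dist_norm)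
  then show "\<forall>\<^sub>F k in sequentially. dist (l2_inner v (y k) - l2_inner v z) 0 < e"
  proof eventually_elim
    case (elim k)
    have "cmod (l2_inner v (y k) - l2_inner v z)
        \<le> cmod (\<Sum>i<M. cnj (v i) * d k i) + cmod (\<Sum>n. cnj (v (n + M)) * d k (n + M))"
      unfolding dec by (rule norm_triangle_ineq)
    then show ?case using elim tail[of k] by (simp add: dist_norm)
  qed
qed

lemma kball_coord:
  assumes "x \<in> Kball" shows "cmod (x i) \<le> 1"
proof -
  have "(\<Sum>j\<in>{i}. (cmod (x j))^2) \<le> (\<Sum>j. (cmod (x j))^2)"
    by (rule sum_le_suminf) (use kball_sum[OF assms] in auto)
  then have "(cmod (x i))^2 \<le> 1^2" using kball_sum(2)[OF assms] by simp
  from power2_le_imp_le[OF this] show ?thesis by simp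
qed

lemma extract_sub:
  fixes zs :: "nat \<Rightarrow> nat \<Rightarrow> complex"
  assumes zs: "\<And>n. zs n \<in> Kball"
  shows "\<exists>r z. strict_mono r \<and> z \<in> Kball \<and> (\<forall>i. (\<lambda>k. zs (r k) i) \<longlonglongrightarrow> z i)"
proof -
  let ?P = "PiE UNIV (\<lambda>_::nat. cball (0::complex) 1)"
  have "compactin (product_topology (\<lambda>i. euclidean) UNIV) ?P"
    by (simp add: compactin_PiE)
  then have "compact ?P" by (simp add: euclidean_product_topology)
  then have sc: "seq_compact ?P" by (rule compact_imp_seq_compact)
  have zP: "\<And>n. zs n \<in> ?P" using kball_coord[OF zs] by (auto simp: PiE_def)
  from sc[unfolded seq_compact_def, rule_format, of zs, OF zP]
  obtain l r where l: "l \<in> ?P" "strict_mono r" "(zs \<circ> r) \<longlonglongrightarrow> l"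
    by (elim bexE exE conjE) blast
  have coord: "(\<lambda>k. zs (r k) i) \<longlonglongrightarrow> l i" for i
    using continuous_on_tendsto_compose[OF continuous_on_product_coordinates l(3), of i] by (simp add: comp_def)
  have part: "(\<Sum>i<M. (cmod (l i))^2) \<le> 1" for M
  proof (rule LIMSEQ_le_const2)
    show "(\<lambda>k. \<Sum>i<M. (cmod (zs (r k) i))^2) \<longlonglongrightarrow> (\<Sum>i<M. (cmod (l i))^2)"
      by (intro tendsto_intros coord)
    show "\<exists>N. \<forall>n\<ge>N. (\<Sum>i<M. (cmod (zs (r n) i))^2) \<le> 1"
    proof (intro exI allI impI)
      fix n
      have "(\<Sum>i<M. (cmod (zs (r n) i))^2) \<le> (\<Sum>i. (cmod (zs (r n) i))^2)"
        by (rule sum_le_suminf) (use kball_sum[OF zs] in auto)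
      then show "(\<Sum>i<M. (cmod (zs (r n) i))^2) \<le> 1" using kball_sum(2)[OF zs, of "r n"] by linarith
    qed
  qed
  have sl: "summable (\<lambda>i. (cmod (l i))^2)"
  proof (rule bounded_imp_summable)
    fix n show "(\<Sum>k\<le>n. (cmod (l k))^2) \<le> 1" using part[of "Suc n"] by (simp add: lessThan_Suc_atMost)
  qed simp
  have "(\<Sum>i. (cmod (l i))^2) \<le> 1" by (rule suminf_le_const[OF sl part])
  then have "l \<in> Kball" using sl unfolding Kball_def l2_def l2_norm_def by simp
  then show ?thesis using l(2) coord by blast
qed

lemma f_bounded:
  assumes f: "continuous_map K_top euclideanreal f"
  shows "\<exists>B. \<forall>z\<in>Kball. \<bar>f z\<bar> \<le> B"
proof (rule ccontr)
  assume "\<not> ?thesis"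
  then have "\<forall>n::nat. \<exists>z\<in>Kball. \<bar>f z\<bar> > real n" by (meson not_le)
  then obtain zs where zs: "\<And>n. zs n \<in> Kball" "\<And>n. \<bar>f (zs n)\<bar> > real n" by metis
  obtain r z where rz: "strict_mono r" "z \<in> Kball" "\<And>i. (\<lambda>k. zs (r k) i) \<longlonglongrightarrow> z i"
    using extract_sub[of zs, OF zs(1)] by blast
  have "(\<lambda>k. f (zs (r k))) \<longlonglongrightarrow> f z"
    by (rule seq_cont[OF f rz(2)]) (use zs(1) weak_conv[OF _ rz(2) rz(3)] in auto)
  then have "Bseq (\<lambda>k. f (zs (r k)))" by (intro convergent_imp_Bseq convergentI)
  then obtain K where K: "K > 0" "\<And>k. norm (f (zs (r k))) \<le> K" by (auto simp: Bseq_def)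
  define k where "k = nat \<lceil>K\<rceil>"
  have "real k \<le> real (r k)" using seq_suble[OF rz(1)] by simp
  then have "\<bar>f (zs (r k))\<bar> > K" using zs(2)[of "r k"] unfolding k_def using real_nat_ceiling_ge[of K] by linarith
  then show False using K(2)[of k] by simp
qed

lemma inner_sq_integrable:
  assumes H: "is_haar N G \<mu>" and Gc: "G = unitary_group N \<or> G = special_unitary_group N"
    and x: "x \<in> l2" and v: "v \<in> l2"
  shows "integrable \<mu> (\<lambda>h. (cmod (l2_inner v (act N h x)))^2)"
proof -
  let ?S = "\<lambda>h. \<Sum>i<N. cnj (v i) * wv N x i h"
  let ?t = "tailv v x N"
  let ?B = "(\<Sum>i<N. cmod (v i)) * (\<Sum>j<N. cmod (x j))"
  have Sc: "continuous_on UNIV ?S" by (intro continuous_intros wv_cont)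
  have SB: "h \<in> G \<Longrightarrow> cmod (?S h) \<le> ?B" for h
    using S_bound G_unitary[OF Gc] by blast
  have i1: "integrable \<mu> (\<lambda>h. (cmod (?S h + ?t))^2)"
  proof (rule bc_integrable[OF H, where B = "(?B + cmod ?t)^2"])
    show "continuous_on UNIV (\<lambda>h. (cmod (?S h + ?t))^2)" by (intro continuous_intros Sc)
    fix h assume "h \<in> G"
    then have "cmod (?S h + ?t) \<le> ?B + cmod ?t" using SB[of h] norm_triangle_ineq[of "?S h" ?t] by linarith
    then show "norm ((cmod (?S h + ?t))^2) \<le> (?B + cmod ?t)^2" by (simp add: power_mono)
  qed
  then show ?thesis by (simp only: inner_act[OF v x])
qed

lemma inner_zero: "l2_inner v (\<lambda>_. 0) = 0"
  unfolding l2_inner_def by simp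

lemma zero_Kball: "(\<lambda>_. 0) \<in> Kball"
  unfolding Kball_def l2_norm_def using zero_l2 by simp

lemma main_bound:
  assumes H: "is_haar N G \<mu>" and Gc: "G = unitary_group N \<or> G = special_unitary_group N"
    and x: "x \<in> Kball" and f: "continuous_map K_top euclideanreal f"
    and B: "\<And>z. z \<in> Kball \<Longrightarrow> \<bar>f z\<bar> \<le> B"
    and V: "finite V" "V \<subseteq> l2" and d: "d > 0"
    and nb: "\<And>w. w \<in> Kball \<Longrightarrow> (\<forall>v\<in>V. cmod (l2_inner v w) < d) \<Longrightarrow> \<bar>f w - f (\<lambda>_. 0)\<bar> < e"
  shows "\<bar>(\<integral>h. f (act N h x) \<partial>\<mu>) - f (\<lambda>_. 0)\<bar>
     \<le> e + (2 * B / d^2) * (\<Sum>v\<in>V. \<integral>h. (cmod (l2_inner v (act N h x)))^2 \<partial>\<mu>)"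
proof -
  have P: "prob_space \<mu>" using H unfolding is_haar_def by auto
  interpret prob_space \<mu> by (rule P)
  have sp: "space \<mu> = G" by (rule haar_space[OF H])
  have xl: "x \<in> l2" using x Kball_l2 by auto
  let ?z = "(\<lambda>_. 0) :: nat \<Rightarrow> complex"
  let ?C = "2 * B / d^2"
  have B0: "0 \<le> B" using B[OF zero_Kball] by linarith
  have C0: "0 \<le> ?C" using B0 d by simp
  have inK: "h \<in> space \<mu> \<Longrightarrow> act N h x \<in> Kball" for h
    using act_Kball[OF x] G_unitary[OF Gc] sp by auto
  have fm: "(\<lambda>h. f (act N h x)) \<in> borel_measurable \<mu>"
    using measurable_comp[OF act_meas[OF H Gc x] f_meas[OF f]] by (simp add: comp_def)
  have fi: "integrable \<mu> (\<lambda>h. f (act N h x))"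
    by (rule integrable_const_bound[where B=B]) (use inK B fm in auto)
  have gi: "integrable \<mu> (\<lambda>h. \<Sum>v\<in>V. (cmod (l2_inner v (act N h x)))^2)"
    using inner_sq_integrable[OF H Gc xl] V(2) by (intro Bochner_Integration.integrable_sum) auto
  have pw: "\<bar>f w - f ?z\<bar> \<le> e + ?C * (\<Sum>v\<in>V. (cmod (l2_inner v w))^2)" if w: "w \<in> Kball" for w
  proof (cases "\<forall>v\<in>V. cmod (l2_inner v w) < d")
    case True
    have "0 \<le> ?C * (\<Sum>v\<in>V. (cmod (l2_inner v w))^2)" using C0 by (intro mult_nonneg_nonneg sum_nonneg) auto
    then show ?thesis using nb[OF w True] by linarith
  next
    case False
    then obtain u where u: "u \<in> V" "cmod (l2_inner u w) \<ge> d" by (auto simp: not_less)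
    have "d^2 \<le> (cmod (l2_inner u w))^2" using u d by (simp add: power_mono)
    also have "\<dots> \<le> (\<Sum>v\<in>V. (cmod (l2_inner v w))^2)"
      using u V by (intro member_le_sum) auto
    finally have "?C * d^2 \<le> ?C * (\<Sum>v\<in>V. (cmod (l2_inner v w))^2)" using C0 by (rule mult_left_mono)
    moreover have "?C * d^2 = 2 * B" using d by simp
    moreover have "e \<ge> 0" using nb[OF zero_Kball] by (simp add: inner_zero d)
    moreover have "\<bar>f w - f ?z\<bar> \<le> 2 * B" using B[OF w] B[OF zero_Kball] by linarith
    ultimately show ?thesis by linarith
  qed
  have "(\<integral>h. f (act N h x) \<partial>\<mu>) - f ?z = (\<integral>h. f (act N h x) - f ?z \<partial>\<mu>)"
    using fi by (simp add: prob_space)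
  then have "\<bar>(\<integral>h. f (act N h x) \<partial>\<mu>) - f ?z\<bar> \<le> (\<integral>h. \<bar>f (act N h x) - f ?z\<bar> \<partial>\<mu>)"
    by (simp only: integral_abs_bound)
  also have "\<dots> \<le> (\<integral>h. e + ?C * (\<Sum>v\<in>V. (cmod (l2_inner v (act N h x)))^2) \<partial>\<mu>)"
  proof (rule integral_mono)
    show "integrable \<mu> (\<lambda>h. \<bar>f (act N h x) - f ?z\<bar>)" using fi by auto
    show "integrable \<mu> (\<lambda>h. e + ?C * (\<Sum>v\<in>V. (cmod (l2_inner v (act N h x)))^2))"
      using gi by auto
    fix h assume "h \<in> space \<mu>"
    then show "\<bar>f (act N h x) - f ?z\<bar> \<le> e + ?C * (\<Sum>v\<in>V. (cmod (l2_inner v (act N h x)))^2)"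
      using pw inK by blast
  qed
  also have "\<dots> = e + ?C * (\<Sum>v\<in>V. \<integral>h. (cmod (l2_inner v (act N h x)))^2 \<partial>\<mu>)"
    using gi inner_sq_integrable[OF H Gc xl] V(2)
    by (simp add: prob_space Bochner_Integration.integral_sum subset_iff)
  finally show ?thesis .
qed

theorem mainTheorem13:
  fixes G :: "nat \<Rightarrow> (nat \<Rightarrow> nat \<Rightarrow> complex) set"
    and haar :: "nat \<Rightarrow> (nat \<Rightarrow> nat \<Rightarrow> complex) measure"
    and x :: "nat \<Rightarrow> complex"
  assumes G: "\<And>N. G N = unitary_group N \<or> G N = special_unitary_group N"
    and haar: "\<And>N. is_haar N (G N) (haar N)"
    and x: "x \<in> Kball"
  shows "\<forall>f. continuous_map K_top euclideanreal f \<longrightarrow>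
    (\<lambda>N. \<integral>y. f y \<partial>(orbit_measure N (haar N) x))
      \<longlonglongrightarrow> (\<integral>y. f y \<partial>(return (borel_of_top K_top) (\<lambda>_. 0)))"
proof (intro allI impI)
  fix f assume f: "continuous_map K_top euclideanreal f"
  let ?z = "(\<lambda>_. 0) :: nat \<Rightarrow> complex"
  have xl: "x \<in> l2" using x Kball_l2 by auto
  have rhs: "(\<integral>y. f y \<partial>(return (borel_of_top K_top) ?z)) = f ?z"
    by (rule integral_return) (simp_all add: borel_K_space zero_Kball f_meas[OF f])
  have lhs: "(\<integral>y. f y \<partial>(orbit_measure N (haar N) x)) = (\<integral>h. f (act N h x) \<partial>haar N)" for N
    unfolding orbit_measure_def by (rule integral_distr[OF act_meas[OF haar G x] f_meas[OF f]])
  obtain B where B: "\<And>z. z \<in> Kball \<Longrightarrow> \<bar>f z\<bar> \<le> B" using f_bounded[OF f] by blast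
  have "(\<lambda>N. \<integral>h. f (act N h x) \<partial>haar N) \<longlonglongrightarrow> f ?z"
  proof (rule tendstoI)
    fix e :: real assume e: "e > 0"
    then have e2: "e / 2 > 0" by simp
    obtain V d where V: "finite V" "V \<subseteq> l2" "d > 0"
      "\<forall>w\<in>Kball. (\<forall>v\<in>V. cmod (l2_inner v w - l2_inner v ?z) < d) \<longrightarrow> \<bar>f w - f ?z\<bar> < e / 2"
      using cont_nbhd[OF f zero_Kball e2] by blast
    have nb: "\<And>w. w \<in> Kball \<Longrightarrow> (\<forall>v\<in>V. cmod (l2_inner v w) < d) \<Longrightarrow> \<bar>f w - f ?z\<bar> < e / 2"
      using V(4) by (simp add: inner_zero)
    let ?C = "2 * B / d^2"
    have "(\<lambda>N. ?C * (\<Sum>v\<in>V. \<integral>h. (cmod (l2_inner v (act N h x)))^2 \<partial>haar N)) \<longlonglongrightarrow> ?C * (\<Sum>v\<in>V. 0)"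
      by (intro tendsto_mult tendsto_const tendsto_sum key_limit[OF G haar xl]) (use V(2) in auto)
    then have "(\<lambda>N. ?C * (\<Sum>v\<in>V. \<integral>h. (cmod (l2_inner v (act N h x)))^2 \<partial>haar N)) \<longlonglongrightarrow> 0" by simp
    from order_tendstoD(2)[OF this e2]
    show "\<forall>\<^sub>F N in sequentially. dist (\<integral>h. f (act N h x) \<partial>haar N) (f ?z) < e"
    proof eventually_elim
      case (elim N)
      have "\<bar>(\<integral>h. f (act N h x) \<partial>haar N) - f ?z\<bar>
          \<le> e / 2 + ?C * (\<Sum>v\<in>V. \<integral>h. (cmod (l2_inner v (act N h x)))^2 \<partial>haar N)"
        by (rule main_bound[OF haar G x f B V(1,2,3) nb])
      then show ?case using elim by (simp add: dist_real_def)
    qed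
  qed
  then show "(\<lambda>N. \<integral>y. f y \<partial>(orbit_measure N (haar N) x))
      \<longlonglongrightarrow> (\<integral>y. f y \<partial>(return (borel_of_top K_top) (\<lambda>_. 0)))"
    unfolding lhs rhs .
qed

end
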